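(* If $T$ is any bounded linear operator on a separable Banach space $X$, then the set $FHC(T)$ of frequently hypercyclic vectors for $T$ is meager in $X$.
   Context: $x\in FHC(T)$ if for every nonempty open $V\subset X$, $\liminf_{N\to\infty}\frac1N\#\{n\in[1,N]:T^nx\in V\}>0$. *)

theory Defs
  imports "HOL-Analysis.Analysis"
begin

definition nowhere_dense :: "'a::topological_space set \<Rightarrow> bool" where
  "nowhere_dense A \<longleftrightarrow> interior (closure A) = {}"

definition meager :: "'a::topological_space set \<Rightarrow> bool" where
  "meager S \<longleftrightarrow> (\<exists>\<F>. countable \<F> \<and> (\<forall>A\<in>\<F>. nowhere_dense A) \<and> S \<subseteq> \<Union>\<F>)"

definition FHC :: "('a::topological_space \<Rightarrow> 'a) \<Rightarrow> 'a set" where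
  "FHC T = {x. \<forall>V. open V \<and> V \<noteq> {} \<longrightarrow>
     liminf (\<lambda>N::nat. ereal (real (card {n\<in>{1..N}. (T ^^ n) x \<in> V}) / real N)) > 0}"

end

theory Submission
  imports Defs
begin

lemma bl_funpow:
  fixes T :: "'a::real_normed_vector \<Rightarrow> 'a"
  shows "bounded_linear T \<Longrightarrow> bounded_linear (T ^^ n)"
proof (induction n)
  case 0
  show ?case by (simp add: id_def)
next
  case (Suc n) then show ?case using bounded_linear_compose[of T "T^^n"] by (simp add: comp_def)
qed

lemma funpow_scale:
  fixes T :: "'a::real_normed_vector \<Rightarrow> 'a"
  assumes "bounded_linear T"
  shows "(T ^^ n) (c *\<^sub>R x) = c *\<^sub>R (T ^^ n) x"
  using bl_funpow[OF assms, of n] by (simp add: linear_simps)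

lemma FHC_hits:
  assumes "x \<in> FHC T" "open U" "U \<noteq> {}"
  shows "\<exists>n\<ge>1. (T ^^ n) x \<in> U"
proof -
  let ?f = "\<lambda>N::nat. ereal (real (card {n\<in>{1..N}. (T ^^ n) x \<in> U}) / real N)"
  have "liminf ?f > 0" using assms unfolding FHC_def by blast
  then have "eventually (\<lambda>N. ?f N > 0) sequentially" by (rule less_LiminfD)
  then obtain N where "?f N > 0" by (auto simp: eventually_sequentially)
  define S where "S = {n\<in>{1..N}. (T ^^ n) x \<in> U}"
  have pos: "real (card S) / real N > 0" using \<open>?f N > 0\<close> unfolding S_def by simp
  have "card S \<noteq> 0"
  proof
    assume "card S = 0"
    with pos show False by simp
  qed
  then have "S \<noteq> {}" by (metis card.empty)
  then obtain n where "n \<in> S"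
    by blast
  then have "n \<in> {n\<in>{1..N}. (T ^^ n) x \<in> U}" unfolding S_def .
  then show ?thesis by auto
qed

lemma closed_count:
  fixes T :: "'a::real_normed_vector \<Rightarrow> 'a"
  assumes T: "bounded_linear T" and F: "closed F"
    and P: "\<And>k k'. P k \<Longrightarrow> k \<le> k' \<Longrightarrow> P k'"
  shows "closed {y. P (card {n\<in>{1..N}. (T ^^ n) y \<in> F})}"
proof -
  let ?S = "{y. \<not> P (card {n\<in>{1..N}. (T ^^ n) y \<in> F})}"
  have "open ?S"
  proof (subst open_subopen, intro ballI)
    fix y assume y: "y \<in> ?S"
    let ?I = "{n\<in>{1..N}. (T ^^ n) y \<notin> F}"
    let ?U = "\<Inter>n\<in>?I. (T ^^ n) -` (- F)"
    have cont: "continuous (at v) (T ^^ n)" for v n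
      by (rule linear_continuous_at, rule bl_funpow[OF T])
    have "open ?U"
      by (intro open_INT ballI continuous_open_vimage cont) (auto simp: F open_Compl)
    moreover have "y \<in> ?U" by auto
    moreover have "?U \<subseteq> ?S"
    proof
      fix y' assume y': "y' \<in> ?U"
      have "{n\<in>{1..N}. (T ^^ n) y' \<in> F} \<subseteq> {n\<in>{1..N}. (T ^^ n) y \<in> F}"
        using y' by auto
      then have "card {n\<in>{1..N}. (T ^^ n) y' \<in> F} \<le> card {n\<in>{1..N}. (T ^^ n) y \<in> F}"
        by (intro card_mono) auto
      then show "y' \<in> ?S" using y P by blast
    qed
    ultimately show "\<exists>U. open U \<and> y \<in> U \<and> U \<subseteq> ?S" by blast
  qed
  moreover have "- {y. P (card {n\<in>{1..N}. (T ^^ n) y \<in> F})} = ?S" by auto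
  ultimately show ?thesis by (simp add: closed_def)
qed

theorem proposition4:
  fixes T :: "'a::banach \<Rightarrow> 'a"
  assumes "separable_space (euclidean :: 'a topology)"
    and "\<exists>x::'a. x \<noteq> 0"
    and "bounded_linear T"
  shows "meager (FHC T)"
proof (cases "FHC T = {}")
  case True
  then show ?thesis unfolding meager_def by (intro exI[of _ "{}"]) auto
next
  case False
  note T = assms(3)
  from False obtain x0 where x0: "x0 \<in> FHC T" by blast
  obtain e :: 'a where "e \<noteq> 0" using assms(2) by blast
  define a where "a = e /\<^sub>R norm e"
  have na: "norm a = 1" using \<open>e \<noteq> 0\<close> by (simp add: a_def)
  define F where "F = cball a (1/3)"
  define H where "H = (\<lambda>y N. {n\<in>{1..N::nat}. (T ^^ n) y \<in> F})"
  define A where "A = (\<lambda>(j::nat,m::nat). {y. \<forall>N. m \<le> N \<longrightarrow>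
       real N \<le> real (Suc j) * real (card (H y N))})"
  have finH: "finite (H y N)" for y N unfolding H_def by auto
  have Hsub: "H y N \<subseteq> {1..N}" for y N unfolding H_def by auto
  have closedA: "closed (A (j,m))" for j m
  proof -
    have "closed {y. (\<lambda>k. m \<le> N \<longrightarrow> real N \<le> real (Suc j) * real k)
               (card {n\<in>{1..N}. (T ^^ n) y \<in> F})}" for N
      by (rule closed_count[OF T]) (auto simp: F_def intro: order_trans mult_left_mono)
    then have "closed {y. \<forall>N. m \<le> N \<longrightarrow> real N \<le> real (Suc j) * real (card (H y N))}"
      unfolding H_def by (intro closed_Collect_all) simp
    then show ?thesis by (simp add: A_def)
  qed
  have cover: "FHC T \<subseteq> \<Union>(A ` UNIV)"
  proof
    fix x assume x: "x \<in> FHC T"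
    let ?V = "ball a (1/3)"
    let ?f = "\<lambda>N::nat. ereal (real (card {n\<in>{1..N}. (T ^^ n) x \<in> ?V}) / real N)"
    have "\<forall>V. open V \<and> V \<noteq> {} \<longrightarrow>
       liminf (\<lambda>N::nat. ereal (real (card {n\<in>{1..N}. (T ^^ n) x \<in> V}) / real N)) > 0"
      using x unfolding FHC_def by simp
    from this[rule_format, of ?V] have l: "liminf ?f > 0" by simp
    have "\<exists>j. ereal (1 / real (Suc j)) < liminf ?f"
    proof (cases "liminf ?f")
      case (real r)
      then have "r > 0" using l by auto
      then obtain n where "n > 0" "inverse (real n) < r"
        using ex_inverse_of_nat_less by blast
      have e: "real (Suc (n-1)) = real n" using \<open>n > 0\<close> by simp
      have "1 / real (Suc (n-1)) < r"
        unfolding e using \<open>inverse (real n) < r\<close> by (simp add: inverse_eq_divide)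
      then have "ereal (1 / real (Suc (n-1))) < liminf ?f" unfolding real by simp
      then show ?thesis by blast
    next
      case PInf then show ?thesis by auto
    next
      case MInf then show ?thesis using l by auto
    qed
    then obtain j where "ereal (1 / real (Suc j)) < liminf ?f" by blast
    then have "eventually (\<lambda>N. ?f N > ereal (1 / real (Suc j))) sequentially"
      by (rule less_LiminfD)
    then obtain m where m: "\<And>N. N \<ge> m \<Longrightarrow> ?f N > ereal (1 / real (Suc j))"
      by (auto simp: eventually_sequentially)
    have "x \<in> A (j,m)"
      unfolding A_def
    proof (clarsimp)
      fix N assume N: "m \<le> N"
      have g: "1 / real (Suc j) < real (card {n\<in>{1..N}. (T ^^ n) x \<in> ?V}) / real N"
        using m[OF N] by simp
      then have "N > 0" by (cases "N = 0") auto
      then have "real N < real (Suc j) * real (card {n\<in>{1..N}. (T ^^ n) x \<in> ?V})"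
        using g by (simp add: field_simps)
      also have "card {n\<in>{1..N}. (T ^^ n) x \<in> ?V} \<le> card (H x N)"
        unfolding H_def F_def by (intro card_mono) auto
      finally show "real N \<le> (1 + real j) * real (card (H x N))" by simp
    qed
    then show "x \<in> \<Union>(A ` UNIV)" by blast
  qed
  have nd: "nowhere_dense (A (j,m))" for j m
  proof -
    have "interior (A (j,m)) = {}"
    proof (rule ccontr)
      assume "interior (A (j,m)) \<noteq> {}"
      then obtain z where "z \<in> interior (A (j,m))" by blast
      then obtain W where W: "open W" "z \<in> W" "W \<subseteq> A (j,m)" by (meson interiorE)
      define K where "K = 2 * Suc j"
      have "\<exists>k. (T ^^ k) ((3::real)^i *\<^sub>R x0) \<in> W" for i :: nat
      proof -
        let ?U = "(\<lambda>v. (3::real)^i *\<^sub>R v) -` W"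
        have "open ?U" by (intro continuous_open_vimage W) (auto intro!: continuous_intros)
        moreover have "(1/3^i) *\<^sub>R z \<in> ?U" using W by simp
        ultimately obtain k where "(T ^^ k) x0 \<in> ?U" using FHC_hits[OF x0, of ?U] by blast
        then show ?thesis by (auto simp: funpow_scale[OF T])
      qed
      then obtain kk where kk: "\<And>i. (T ^^ kk i) ((3::real)^i *\<^sub>R x0) \<in> W" by metis
      define K0 where "K0 = (\<Sum>i<K. kk i)"
      have kkle: "kk i \<le> K0" if "i < K" for i
        unfolding K0_def using that by (intro member_le_sum) auto
      define N' where "N' = m + K0 + 1"
      define N where "N = N' + K0"
      define H' where "H' = (\<lambda>i. H ((3::real)^i *\<^sub>R x0) N)"
      have cw: "real N' \<le> real (Suc j) * real (card (H' i))" if i: "i < K" for i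
      proof -
        let ?w = "(T ^^ kk i) ((3::real)^i *\<^sub>R x0)"
        have "?w \<in> A (j,m)" using kk W by blast
        then have "\<forall>N. m \<le> N \<longrightarrow> real N \<le> real (Suc j) * real (card (H ?w N))"
          unfolding A_def by simp
        moreover have "m \<le> N'" unfolding N'_def by simp
        ultimately have 1: "real N' \<le> real (Suc j) * real (card (H ?w N'))"
          by blast
        have "(\<lambda>n. n + kk i) ` H ?w N' \<subseteq> H' i"
        proof
          fix n' assume "n' \<in> (\<lambda>n. n + kk i) ` H ?w N'"
          then obtain n where n: "n' = n + kk i" "n \<in> H ?w N'" by blast
          have "(T ^^ (n + kk i)) ((3::real)^i *\<^sub>R x0) = (T ^^ n) ?w"
            by (simp add: funpow_add)
          then show "n' \<in> H' i" using n kkle[OF i]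
            unfolding H'_def H_def N_def by auto
        qed
        then have "card ((\<lambda>n. n + kk i) ` H ?w N') \<le> card (H' i)"
          unfolding H'_def by (intro card_mono finH)
        moreover have "card ((\<lambda>n. n + kk i) ` H ?w N') = card (H ?w N')"
          by (intro card_image) (auto simp: inj_on_def)
        ultimately have "card (H ?w N') \<le> card (H' i)" by simp
        then show ?thesis using 1
          by (meson mult_left_mono of_nat_0_le_iff of_nat_mono order_trans)
      qed
      have disj: "H' i \<inter> H' l = {}" if "i < l" for i l
      proof (rule ccontr)
        assume "H' i \<inter> H' l \<noteq> {}"
        then obtain n where n: "n \<in> H' i" "n \<in> H' l" by blast
        define v where "v = (T ^^ n) x0"
        have "(3::real)^i *\<^sub>R v \<in> cball a (1/3)" "(3::real)^l *\<^sub>R v \<in> cball a (1/3)"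
          using n unfolding H'_def H_def F_def v_def by (auto simp: funpow_scale[OF T])
        then have d1: "norm (a - (3::real)^i *\<^sub>R v) \<le> 1/3"
          and d2: "norm (a - (3::real)^l *\<^sub>R v) \<le> 1/3" by (auto simp: dist_norm)
        have "norm a \<le> norm (a - (3::real)^i *\<^sub>R v) + norm ((3::real)^i *\<^sub>R v)"
          using norm_triangle_sub[of a "(3::real)^i *\<^sub>R v"] by (simp add: add.commute)
        then have g1: "3^i * norm v \<ge> 2/3" using d1 na by simp
        have "norm ((3::real)^l *\<^sub>R v) \<le> norm a + norm (a - (3::real)^l *\<^sub>R v)"
          by (metis norm_minus_commute norm_triangle_sub)
        then have g2: "3^l * norm v \<le> 4/3" using d2 na by simp
        have "(3::real)^l \<ge> 3 * 3^i"
        proof -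
          have "(3::real)^l = 3^(Suc i + (l - Suc i))" using that by simp
          also have "\<dots> = 3^(Suc i) * 3^(l - Suc i)" by (rule power_add)
          finally have "(3::real)^l = 3^(Suc i) * 3^(l - Suc i)" .
          also have "\<dots> \<ge> 3^(Suc i)" by simp
          finally show ?thesis by simp
        qed
        then have "3^l * norm v \<ge> 3 * 3^i * norm v" by (simp add: mult_right_mono)
        then show False using g1 g2 by simp
      qed
      have dj: "\<forall>i\<in>{..<K}. \<forall>l\<in>{..<K}. i \<noteq> l \<longrightarrow> H' i \<inter> H' l = {}"
      proof (intro ballI impI)
        fix i l :: nat assume "i \<noteq> l"
        then show "H' i \<inter> H' l = {}"
        proof (cases "i < l")
          case True then show ?thesis by (rule disj)
        next
          case False
          then have "l < i" using \<open>i \<noteq> l\<close> by simp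
          then have "H' l \<inter> H' i = {}" by (rule disj)
          then show ?thesis by (simp add: Int_commute)
        qed
      qed
      have fH': "\<forall>i\<in>{..<K}. finite (H' i)" unfolding H'_def using finH by blast
      have eq: "(\<Sum>i<K. card (H' i)) = card (\<Union>i<K. H' i)"
        using card_UN_disjoint[of "{..<K}" H', OF _ fH' dj] by simp
      have sub: "(\<Union>i<K. H' i) \<subseteq> {1..N}" unfolding H'_def using Hsub by blast
      then have le: "card (\<Union>i<K. H' i) \<le> card {1..N}" by (intro card_mono) auto
      have sumle: "(\<Sum>i<K. card (H' i)) \<le> N" using eq le by simp
      have "real K * real N' \<le> real (Suc j) * (\<Sum>i<K. real (card (H' i)))"
      proof -
        have "(\<Sum>i<K. real N') \<le> (\<Sum>i<K. real (Suc j) * real (card (H' i)))"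
          by (intro sum_mono cw) auto
        then show ?thesis by (simp add: sum_distrib_left)
      qed
      also have "\<dots> \<le> real (Suc j) * real N"
        using sumle by (intro mult_left_mono) (simp_all flip: of_nat_sum)
      finally have "real K * real N' \<le> real (Suc j) * real N" .
      then have "real (Suc j) * (2 * real N') \<le> real (Suc j) * real N"
        unfolding K_def by (simp add: algebra_simps)
      then have "2 * real N' \<le> real N"
        by (rule mult_left_le_imp_le) simp
      then show False unfolding N_def N'_def by simp
    qed
    then show ?thesis using closedA unfolding nowhere_dense_def
      by (simp add: closure_closed)
  qed
  show ?thesis unfolding meager_def
  proof (intro exI[of _ "A ` UNIV"] conjI)
    show "countable (A ` UNIV)" by (rule countable_image) simp
    show "\<forall>B\<in>A ` UNIV. nowhere_dense B" using nd by auto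
    show "FHC T \<subseteq> \<Union>(A ` UNIV)" by (rule cover)
  qed
qed

end
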